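(* Let $\bar N$ be an $n$-dimensional Riemannian manifold and consider the product Riemannian manifold $\bar N\times\mathbb{R}^s$, $s>1$, with the product metric. Then every compact subset $K\subset\bar N\times\mathbb{R}^s$ contains no non-zero $(n+k)$-varifold with null first variation relative to $\bar N\times\mathbb{R}^s$, for every $k=1,\dots,s-1$.
   Context: Let $(Z,h)$ be a Riemannian manifold of dimension $z$, isometrically embedded in some Euclidean space $\mathbb{R}^L$, and $K\subset Z$. For $1\le j\le z$, a $j$-varifold in $K$ is a Radon measure $V$ on $G_j(K)=\{(x,P):x\in K,\ P \text{ a } j\text{-dimensional linear subspace of } T_xZ\}$ (planes identified with their orthogonal projection matrices in $\mathbb{R}^L$). $V$ has null first variation relative to $Z$ (is stationary in $Z$) if $\int_{G_j(K)}\operatorname{div}_PX(x)\,dV(x,P)=0$ for every compactly supported $C^1$ vector field $X$ on $Z$ tangent to $Z$, where $\operatorname{div}_PX=\sum_{i,l}P_{il}\partial_lX^i$ (with $X$ extended to a neighborhood in $\mathbb{R}^L$). *)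

theory Defs
  imports "HOL-Analysis.Analysis" "HOL-Probability.Probability"
begin

fun ck_on :: "nat \<Rightarrow> 'a::euclidean_space set \<Rightarrow> ('a \<Rightarrow> 'b::real_normed_vector) \<Rightarrow> bool" where
  "ck_on 0 S f = continuous_on S f"
| "ck_on (Suc k) S f =
     (f differentiable_on S \<and> (\<forall>v. ck_on k S (\<lambda>x. frechet_derivative f (at x) v)))"

definition smooth_on :: "'a::euclidean_space set \<Rightarrow> ('a \<Rightarrow> 'b::real_normed_vector) \<Rightarrow> bool" where
  "smooth_on S f \<longleftrightarrow> (\<forall>k. ck_on k S f)"

definition smooth_diffeo :: "'a::euclidean_space set \<Rightarrow> 'a set \<Rightarrow> ('a \<Rightarrow> 'a) \<Rightarrow> ('a \<Rightarrow> 'a) \<Rightarrow> bool" where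
  "smooth_diffeo U V \<phi> \<psi> \<longleftrightarrow> open U \<and> open V \<and> smooth_on U \<phi> \<and> smooth_on V \<psi> \<and>
     \<phi> ` U = V \<and> (\<forall>x\<in>U. \<psi> (\<phi> x) = x) \<and> (\<forall>y\<in>V. \<phi> (\<psi> y) = y)"

text \<open>M is an n-dimensional smooth embedded submanifold of the Euclidean space 'a
  (with the induced Riemannian metric): locally straightened by a diffeomorphism
  of the ambient space onto an n-dimensional linear subspace.\<close>
definition smooth_submanifold :: "nat \<Rightarrow> 'a::euclidean_space set \<Rightarrow> bool" where
  "smooth_submanifold n M \<longleftrightarrow>
     (\<forall>p\<in>M. \<exists>U V \<phi> \<psi> E. p \<in> U \<and> smooth_diffeo U V \<phi> \<psi> \<and> subspace E \<and> dim E = n \<and>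
        \<phi> ` (M \<inter> U) = V \<inter> E)"

definition tangent_space :: "'a::euclidean_space set \<Rightarrow> 'a \<Rightarrow> 'a set" where
  "tangent_space Z x = {v. \<exists>\<gamma>. (\<forall>t. \<gamma> t \<in> Z) \<and> \<gamma> 0 = x \<and> (\<gamma> has_vector_derivative v) (at 0)}"

definition is_plane :: "'a::euclidean_space set \<Rightarrow> nat \<Rightarrow> 'a \<Rightarrow> ('a \<Rightarrow>\<^sub>L 'a) \<Rightarrow> bool" where
  "is_plane Z j x P \<longleftrightarrow> (\<exists>S. subspace S \<and> dim S = j \<and> S \<subseteq> tangent_space Z x \<and>
      (\<forall>v. blinfun_apply P v \<in> S \<and> (\<forall>w\<in>S. (v - blinfun_apply P v) \<bullet> w = 0)))"

definition grassmann_bundle :: "'a::euclidean_space set \<Rightarrow> nat \<Rightarrow> 'a set \<Rightarrow> ('a \<times> ('a \<Rightarrow>\<^sub>L 'a)) set" where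
  "grassmann_bundle Z j K = {(x, P). x \<in> K \<and> is_plane Z j x P}"

text \<open>A j-varifold in K: a Radon measure on G_j(K), i.e. (G_j(K) being compact for compact K)
  a finite Borel measure concentrated on G_j(K).\<close>
definition varifold :: "'a::euclidean_space set \<Rightarrow> nat \<Rightarrow> 'a set \<Rightarrow> ('a \<times> ('a \<Rightarrow>\<^sub>L 'a)) measure \<Rightarrow> bool" where
  "varifold Z j K V \<longleftrightarrow> sets V = sets borel \<and> emeasure V (space V) < \<infinity> \<and>
      (AE xP in V. xP \<in> grassmann_bundle Z j K)"

definition div_plane :: "('a::euclidean_space \<Rightarrow>\<^sub>L 'a) \<Rightarrow> ('a \<Rightarrow>\<^sub>L 'a) \<Rightarrow> real" where
  "div_plane P DX = (\<Sum>b\<in>Basis. blinfun_apply P b \<bullet> blinfun_apply DX b)"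

text \<open>Admissible test fields: C^1 vector fields X (extended to the ambient space), tangent to Z,
  with compact support in Z.\<close>
definition tangent_test_field :: "'a::euclidean_space set \<Rightarrow> ('a \<Rightarrow> 'a) \<Rightarrow> ('a \<Rightarrow> ('a \<Rightarrow>\<^sub>L 'a)) \<Rightarrow> bool" where
  "tangent_test_field Z X DX \<longleftrightarrow>
     (\<forall>x. (X has_derivative blinfun_apply (DX x)) (at x)) \<and> continuous_on UNIV DX \<and>
     (\<forall>x\<in>Z. X x \<in> tangent_space Z x) \<and>
     compact (closure {x\<in>Z. X x \<noteq> 0}) \<and> closure {x\<in>Z. X x \<noteq> 0} \<subseteq> Z"

definition stationary :: "'a::euclidean_space set \<Rightarrow> ('a \<times> ('a \<Rightarrow>\<^sub>L 'a)) measure \<Rightarrow> bool" where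
  "stationary Z V \<longleftrightarrow> (\<forall>X DX. tangent_test_field Z X DX \<longrightarrow>
      (\<integral>xP. div_plane (snd xP) (DX (fst xP)) \<partial>V) = 0)"

end

theory Submission
  imports Defs
begin


definition G :: "real \<Rightarrow> real" where
  "G t = (if t \<le> 0 then 0 else if 1 \<le> t then 1 else 3*t^2 - 2*t^3)"
definition G' :: "real \<Rightarrow> real" where
  "G' t = (if t \<le> 0 then 0 else if 1 \<le> t then 0 else 6*t - 6*t^2)"

lemma DERIV_split:
  fixes x :: real
  assumes "(f has_field_derivative D) (at x within {..x})"
    and "(f has_field_derivative D) (at x within {x..})"
  shows "(f has_field_derivative D) (at x)"
proof -
  have U: "{..x} \<union> {x..} = UNIV" by (auto simp: not_le)
  show ?thesis using assms unfolding has_field_derivative_iff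
    using Lim_within_Un[of _ D x "{..x}" "{x..}"] U by simp
qed

lemma poly_deriv: "((\<lambda>t::real. 3*t^2 - 2*t^3) has_field_derivative (6*t - 6*t^2)) (at t within S)"
  by (auto intro!: derivative_eq_intros simp: power2_eq_square power3_eq_cube field_simps)

lemma G_deriv: "(G has_field_derivative G' t) (at t)"
proof -
  consider "t < 0" | "t = 0" | "0 < t \<and> t < 1" | "t = 1" | "1 < t" by linarith
  then show ?thesis
  proof cases
    case 1
    then have e: "G' t = 0" by (simp add: G'_def)
    show ?thesis unfolding e
      by (rule has_field_derivative_transform_within_open[OF DERIV_const, where S="{..<0}"])
         (use 1 in \<open>auto simp: G_def\<close>)
  next
    case 3
    then have e: "G' t = 6*t - 6*t^2" by (simp add: G'_def)
    show ?thesis unfolding e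
      by (rule has_field_derivative_transform_within_open[OF poly_deriv, where S="{0<..<1}"])
         (use 3 in \<open>auto simp: G_def G'_def\<close>)
  next
    case 5
    then have e: "G' t = 0" by (simp add: G'_def)
    show ?thesis unfolding e
      by (rule has_field_derivative_transform_within_open[OF DERIV_const, where S="{1<..}"])
         (use 5 in \<open>auto simp: G_def\<close>)
  next
    case 2
    have e1: "G' t = 0" and e2: "G' t = 6*t - 6*t^2" using 2 by (simp_all add: G'_def)
    show ?thesis
    proof (rule DERIV_split)
      show "(G has_field_derivative G' t) (at t within {..t})"
        apply (subst e1)
        by (rule has_field_derivative_transform_within[OF DERIV_const, where d=1])
           (use 2 in \<open>auto simp: G_def G'_def\<close>)
      show "(G has_field_derivative G' t) (at t within {t..})"
        apply (subst e2)
        by (rule has_field_derivative_transform_within[OF poly_deriv, where d=1])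
           (use 2 in \<open>auto simp: G_def G'_def dist_real_def\<close>)
    qed
  next
    case 4
    have e1: "G' t = 0" and e2: "G' t = 6*t - 6*t^2" using 4 by (simp_all add: G'_def)
    show ?thesis
    proof (rule DERIV_split)
      show "(G has_field_derivative G' t) (at t within {..t})"
        apply (subst e2)
        by (rule has_field_derivative_transform_within[OF poly_deriv, where d=1])
           (use 4 in \<open>auto simp: G_def G'_def dist_real_def\<close>)
      show "(G has_field_derivative G' t) (at t within {t..})"
        apply (subst e1)
        by (rule has_field_derivative_transform_within[OF DERIV_const, where d=1])
           (use 4 in \<open>auto simp: G_def G'_def\<close>)
    qed
  qed
qed

lemma G'_cont: "continuous_on UNIV G'"
proof -
  have eq: "G' = (\<lambda>t. 6*(max 0 (min 1 t)) - 6*(max 0 (min 1 t))^2)"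
    by (auto simp: G'_def fun_eq_iff max_def min_def)
  show ?thesis by (subst eq) (intro continuous_intros)
qed

lemma G_nonneg: "0 \<le> G t"
proof -
  have "0 \<le> t \<Longrightarrow> t \<le> 1 \<Longrightarrow> 0 \<le> t^2 * (3 - 2*t)" by simp
  then show ?thesis by (auto simp: G_def power2_eq_square power3_eq_cube algebra_simps)
qed

lemma G_one: "1 \<le> t \<Longrightarrow> G t = 1" by (simp add: G_def)
lemma G'_one: "1 \<le> t \<Longrightarrow> G' t = 0" by (simp add: G'_def)
lemma G_zero: "t \<le> 0 \<Longrightarrow> G t = 0" by (simp add: G_def)


lemma G_cont: "continuous_on UNIV G"
  using G_deriv by (meson DERIV_isCont continuous_at_imp_continuous_on)

lemma G_cont_intro[continuous_intros]: "continuous_on S f \<Longrightarrow> continuous_on S (\<lambda>x. G (f x))"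
  using continuous_on_compose2[OF G_cont] by blast

lemma G'_cont_intro[continuous_intros]: "continuous_on S f \<Longrightarrow> continuous_on S (\<lambda>x. G' (f x))"
  using continuous_on_compose2[OF G'_cont] by blast

lemma chart:
  fixes N :: "'a::euclidean_space set"
  assumes "smooth_submanifold n N" "p \<in> N"
  obtains U \<phi> E where "open U" "p \<in> U" "subspace E" "dim E = n"
    "\<And>x. x \<in> U \<Longrightarrow> (\<phi>::'a\<Rightarrow>'a) differentiable (at x)"
    "\<And>x. x \<in> U \<Longrightarrow> x \<in> N \<longleftrightarrow> \<phi> x \<in> E"
    "\<And>D. (\<phi> has_derivative D) (at p) \<Longrightarrow> inj D"
proof -
  obtain U V \<phi> \<psi> E where pU: "p \<in> U" and sd: "smooth_diffeo U V \<phi> \<psi>" and E: "subspace E" "dim E = n"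
    and im: "\<phi> ` (N \<inter> U) = V \<inter> E"
    using assms unfolding smooth_submanifold_def by meson
  have oU: "open U" and oV: "open V" and sU: "smooth_on U \<phi>" and sV: "smooth_on V \<psi>"
    and UV: "\<phi> ` U = V" and inv: "\<And>x. x\<in>U \<Longrightarrow> \<psi> (\<phi> x) = x"
    using sd unfolding smooth_diffeo_def by auto
  have dU: "\<phi> differentiable_on U" using sU unfolding smooth_on_def
    using ck_on.simps(2)[of 0 U \<phi>] by blast
  have dV: "\<psi> differentiable_on V" using sV unfolding smooth_on_def
    using ck_on.simps(2)[of 0 V \<psi>] by blast
  have dx: "\<phi> differentiable (at x)" if "x \<in> U" for x
    using dU oU that by (simp add: differentiable_on_eq_differentiable_at)
  have mem: "x \<in> N \<longleftrightarrow> \<phi> x \<in> E" if "x \<in> U" for x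
  proof
    assume "x \<in> N" then show "\<phi> x \<in> E" using im that by blast
  next
    assume "\<phi> x \<in> E"
    moreover have "\<phi> x \<in> V" using UV that by blast
    ultimately have "\<phi> x \<in> \<phi> ` (N \<inter> U)" using im by blast
    then obtain x' where x': "x' \<in> N \<inter> U" "\<phi> x' = \<phi> x" by auto
    then have "x' = x" using inv[of x] inv[of x'] that by simp
    then show "x \<in> N" using x' by simp
  qed
  have injD: "inj D" if D: "(\<phi> has_derivative D) (at p)" for D
  proof -
    have "\<phi> p \<in> V" using UV pU by blast
    then have "\<psi> differentiable (at (\<phi> p))"
      using dV oV by (simp add: differentiable_on_eq_differentiable_at)
    then obtain D2 where D2: "(\<psi> has_derivative D2) (at (\<phi> p))"
      unfolding differentiable_def by blast
    have c: "((\<psi> \<circ> \<phi>) has_derivative (D2 \<circ> D)) (at p)"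
      using diff_chain_at[OF D D2] .
    have "((\<psi> \<circ> \<phi>) has_derivative id) (at p)"
      by (rule has_derivative_transform_within_open[OF has_derivative_id oU pU])
         (simp add: inv)
    then have "D2 \<circ> D = id" using has_derivative_unique c by blast
    show "inj D"
    proof (rule injI)
      fix a b assume "D a = D b"
      then have "(D2 \<circ> D) a = (D2 \<circ> D) b" by simp
      then show "a = b" using \<open>D2 \<circ> D = id\<close> by simp
    qed
  qed
  show ?thesis by (rule that[OF oU pU E dx mem injD])
qed
lemma loc_closed:
  fixes N :: "'a::euclidean_space set"
  assumes "smooth_submanifold n N" "p \<in> N"
  obtains r where "r > 0" "closed (N \<inter> cball p r)"
proof -
  obtain U E and \<phi> :: "'a \<Rightarrow> 'a" where oU: "open U" "p \<in> U" and E: "subspace E"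
    and d: "\<And>x. x \<in> U \<Longrightarrow> \<phi> differentiable (at x)"
    and mem: "\<And>x. x \<in> U \<Longrightarrow> x \<in> N \<longleftrightarrow> \<phi> x \<in> E"
    using chart[OF assms] by metis
  obtain r where r: "r > 0" "cball p r \<subseteq> U" using oU open_contains_cball by blast
  have "continuous_on (cball p r) \<phi>"
    using d r(2) by (meson continuous_at_imp_continuous_on differentiable_imp_continuous_within subsetD)
  then have "closed (cball p r \<inter> \<phi> -` E)"
    using continuous_closed_preimage closed_subspace E closed_cball by blast
  moreover have "cball p r \<inter> \<phi> -` E = N \<inter> cball p r" using mem r(2) by auto
  ultimately show ?thesis using that r(1) by auto
qed

lemma tangent_bound:
  fixes N :: "'a::euclidean_space set"
  assumes "smooth_submanifold n N" "p \<in> N"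
  obtains T where "subspace T" "dim T \<le> n" "tangent_space N p \<subseteq> T"
proof -
  obtain U E and \<phi> :: "'a \<Rightarrow> 'a" where oU: "open U" "p \<in> U" and E: "subspace E" "dim E = n"
    and d: "\<And>x. x \<in> U \<Longrightarrow> \<phi> differentiable (at x)"
    and mem: "\<And>x. x \<in> U \<Longrightarrow> x \<in> N \<longleftrightarrow> \<phi> x \<in> E"
    and injD: "\<And>D. (\<phi> has_derivative D) (at p) \<Longrightarrow> inj D"
    using chart[OF assms] by metis
  obtain D where D: "(\<phi> has_derivative D) (at p)" using d oU unfolding differentiable_def by blast
  have lin: "linear D" using D has_derivative_linear by blast
  have inj: "inj D" using injD D by blast
  define T where "T = D -` E"
  have sT: "subspace T" unfolding T_def using E lin using linear_subspace_vimage by blast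
  have "dim (D ` T) = dim T"
    using dim_image_eq inj_on_subset lin inj by blast
  moreover have "D ` T \<subseteq> E" unfolding T_def by auto
  ultimately have dT: "dim T \<le> n" using dim_subset[of "D ` T" E] E(2) by simp
  have "tangent_space N p \<subseteq> T"
  proof
    fix v assume "v \<in> tangent_space N p"
    then obtain \<gamma> where g: "\<And>t. \<gamma> t \<in> N" "\<gamma> 0 = p" and gd: "(\<gamma> has_vector_derivative v) (at 0)"
      unfolding tangent_space_def by blast
    have "D v \<in> E\<^sup>\<bottom>\<^sup>\<bottom>"
      unfolding orthogonal_comp_def[of "E\<^sup>\<bottom>"] orthogonal_def
    proof (intro CollectI ballI)
      fix w assume w: "w \<in> E\<^sup>\<bottom>"
      have c: "continuous (at 0) \<gamma>" using gd has_vector_derivative_continuous by blast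
      then obtain S where S: "open S" "0 \<in> S" "\<And>t. t \<in> S \<Longrightarrow> \<gamma> t \<in> U"
        using oU g(2) unfolding continuous_at_open by metis
      have z: "w \<bullet> \<phi> (\<gamma> t) = 0" if "t \<in> S" for t
      proof -
        have "\<phi> (\<gamma> t) \<in> E" using mem S(3)[OF that] g(1) by blast
        then show ?thesis using w unfolding orthogonal_comp_def orthogonal_def by (auto simp: inner_commute)
      qed
      have gd': "(\<gamma> has_derivative (\<lambda>t. t *\<^sub>R v)) (at 0)"
        using gd unfolding has_vector_derivative_def .
      have D': "(\<phi> has_derivative D) (at (\<gamma> 0))" using D g(2) by simp
      have "((\<lambda>t. w \<bullet> \<phi> (\<gamma> t)) has_derivative (\<lambda>t. w \<bullet> D (t *\<^sub>R v))) (at 0)"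
        using diff_chain_at[OF gd' D'] 
        by (auto intro!: derivative_eq_intros simp: o_def)
      moreover have "((\<lambda>t. w \<bullet> \<phi> (\<gamma> t)) has_derivative (\<lambda>t. 0)) (at 0)"
        by (rule has_derivative_transform_within_open[OF has_derivative_const S(1) S(2)])
           (simp add: z)
      ultimately have "(\<lambda>t. w \<bullet> D (t *\<^sub>R v)) = (\<lambda>t. 0)" using has_derivative_unique by blast
      then have "w \<bullet> D (1 *\<^sub>R v) = 0" by metis
      then show "w \<bullet> D v = 0" by simp
    qed
    then show "v \<in> T" unfolding T_def using orthogonal_comp_self[OF E(1)] by simp
  qed
  show ?thesis using that sT dT \<open>tangent_space N p \<subseteq> T\<close> by blast
qed



lemma proj_facts:
  fixes P :: "'b::euclidean_space \<Rightarrow>\<^sub>L 'b"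
  assumes S: "subspace S" and h: "\<forall>v. P v \<in> S \<and> (\<forall>w\<in>S. (v - P v) \<bullet> w = 0)"
  shows "\<And>w. w \<in> S \<Longrightarrow> P w = w" "\<And>v. P v \<bullet> v = P v \<bullet> P v" "\<And>v. norm (P v) \<le> norm v"
proof -
  fix w assume w: "w \<in> S"
  have "w - P w \<in> S" using w h S by (simp add: subspace_diff)
  then have "(w - P w) \<bullet> (w - P w) = 0" using h by blast
  then show "P w = w" by simp
next
  fix v
  have "(v - P v) \<bullet> P v = 0" using h by blast
  then show "P v \<bullet> v = P v \<bullet> P v" by (simp add: inner_diff_left inner_diff_right inner_commute)
next
  fix v
  have e: "(v - P v) \<bullet> P v = 0" using h by blast
  have "norm (P v) ^ 2 = P v \<bullet> v" using e by (simp add: inner_diff_left inner_diff_right inner_commute power2_norm_eq_inner)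
  also have "\<dots> \<le> norm (P v) * norm v" using Cauchy_Schwarz_ineq2 by (metis norm_cauchy_schwarz)
  finally have "norm (P v) * norm (P v) \<le> norm (P v) * norm v" by (simp add: power2_eq_square)
  then show "norm (P v) \<le> norm v"
    by (metis mult_le_cancel_left_pos norm_ge_zero order_le_less norm_zero zero_less_norm_iff norm_ge_zero)
qed

lemma tangent_prod:
  fixes N :: "'a::euclidean_space set"
  shows "tangent_space (N \<times> (UNIV::'b::euclidean_space set)) z \<subseteq> {w. fst w \<in> tangent_space N (fst z)}"
proof
  fix w assume "w \<in> tangent_space (N \<times> (UNIV::'b set)) z"
  then obtain \<gamma> where g: "\<And>t. \<gamma> t \<in> N \<times> (UNIV::'b set)" "\<gamma> 0 = z" and gd: "(\<gamma> has_vector_derivative w) (at 0)"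
    unfolding tangent_space_def by blast
  have "((\<lambda>t. fst (\<gamma> t)) has_derivative (\<lambda>t. fst (t *\<^sub>R w))) (at 0)"
    using gd unfolding has_vector_derivative_def by (intro has_derivative_fst)
  then have "((\<lambda>t. fst (\<gamma> t)) has_vector_derivative fst w) (at 0)"
    unfolding has_vector_derivative_def by simp
  moreover have "\<And>t. fst (\<gamma> t) \<in> N" using g(1) by (simp add: mem_Times_iff)
  ultimately show "w \<in> {w. fst w \<in> tangent_space N (fst z)}"
    unfolding tangent_space_def using g(2) by (intro CollectI exI[of _ "\<lambda>t. fst (\<gamma> t)"]) auto
qed

lemma plane_pos:
  fixes N :: "'a::euclidean_space set" and P :: "('a \<times> 'b::euclidean_space) \<Rightarrow>\<^sub>L ('a \<times> 'b)"
  assumes T: "subspace T" "dim T \<le> n" "tangent_space N (fst z) \<subseteq> T"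
    and pl: "is_plane (N \<times> (UNIV::'b set)) (n + k) z P" and k: "1 \<le> k"
  shows "0 < (\<Sum>v\<in>Basis. P (0, v) \<bullet> (0, v))" "(\<Sum>v\<in>Basis. P (0, v) \<bullet> (0, v)) \<le> DIM('b)"
proof -
  obtain S where S: "subspace S" "dim S = n + k" "S \<subseteq> tangent_space (N \<times> (UNIV::'b set)) z"
    and h: "\<forall>v. P v \<in> S \<and> (\<forall>w\<in>S. (v - P v) \<bullet> w = 0)"
    using pl unfolding is_plane_def by blast
  note pf = proj_facts[OF S(1) h]
  have ST: "fst ` S \<subseteq> T" using S(3) tangent_prod[of N z] T(3) by auto
  have "\<exists>w\<in>S. w \<noteq> 0 \<and> fst w = 0"
  proof (rule ccontr)
    assume "\<not> ?thesis"
    then have nz: "\<And>w. w \<in> S \<Longrightarrow> fst w = 0 \<Longrightarrow> w = 0" by blast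
    have "inj_on fst (span S)"
    proof (rule inj_onI)
      fix a b assume "a \<in> span S" "b \<in> span S" "fst a = fst b"
      moreover have "span S = S" using S(1) by (simp add: span_eq_iff)
      ultimately have "a \<in> S" "b \<in> S" by auto
      then have "a - b \<in> S" "fst (a - b) = 0" using S(1) \<open>fst a = fst b\<close> by (auto intro: subspace_diff)
      then have "a - b = 0" using nz by blast
      then show "a = b" by simp
    qed
    then have "dim (fst ` S) = dim S" using dim_image_eq linear_fst by blast
    moreover have "dim (fst ` S) \<le> dim T" by (rule dim_subset[OF ST])
    ultimately show False using S(2) T(2) k by simp
  qed
  then obtain w where w: "w \<in> S" "w \<noteq> 0" "fst w = 0" by blast
  have terms: "P (0, v) \<bullet> (0, v) = norm (P (0,v)) ^ 2" for v
    using pf(2) by (simp add: power2_norm_eq_inner)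
  have le1: "P (0, v) \<bullet> (0, v) \<le> 1" if "v \<in> Basis" for v
  proof -
    have "norm (P (0,v)) \<le> norm ((0::'a), v)" using pf(3) .
    also have "\<dots> = 1" using that by (simp add: norm_Pair)
    finally have "norm (P (0,v)) \<le> 1" .
    then show ?thesis unfolding terms by (rule power_le_one[OF norm_ge_zero])
  qed
  show "(\<Sum>v\<in>Basis. P (0, v) \<bullet> (0, v)) \<le> DIM('b)"
    using sum_mono[OF le1, of Basis] by simp
  show "0 < (\<Sum>v\<in>Basis. P (0, v) \<bullet> (0, v))"
  proof (rule ccontr)
    assume "\<not> ?thesis"
    moreover have nn: "\<forall>v\<in>Basis. 0 \<le> P (0, v) \<bullet> (0, v)" unfolding terms by simp
    moreover have "0 \<le> (\<Sum>v\<in>Basis. P (0, v) \<bullet> (0, v))" using nn by (intro sum_nonneg) auto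
    ultimately have "(\<Sum>v\<in>Basis. P (0, v) \<bullet> (0, v)) = 0" by linarith
    moreover have "(\<Sum>v\<in>Basis. P (0, v) \<bullet> (0, v)) = 0 \<longleftrightarrow> (\<forall>v\<in>Basis. P (0, v) \<bullet> (0, v) = 0)"
      by (rule sum_nonneg_eq_0_iff) (use nn in auto)
    ultimately have "\<forall>v\<in>Basis. P (0, v) \<bullet> (0, v) = 0" by blast
    then have z: "\<And>v. v \<in> Basis \<Longrightarrow> P (0, v) = 0" unfolding terms by simp
    define y where "y = snd w"
    have wy: "w = (\<Sum>v\<in>Basis. (y \<bullet> v) *\<^sub>R ((0::'a), v))"
      using w(3) by (intro prod_eqI) (simp_all add: fst_sum snd_sum y_def euclidean_representation)
    have "P w = (\<Sum>v\<in>Basis. P ((y \<bullet> v) *\<^sub>R ((0::'a), v)))"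
      by (subst wy) (rule blinfun.sum_right)
    also have "\<dots> = (\<Sum>v\<in>Basis. (y \<bullet> v) *\<^sub>R P (0, v))"
      by (simp only: blinfun.scaleR_right)
    also have "\<dots> = 0" using z by simp
    finally show False using pf(1)[OF w(1)] w(2) by simp
  qed
qed

lemma G_chainI[derivative_intros]:
  "(g has_derivative g') (at x within s) \<Longrightarrow>
   ((\<lambda>x. G (g x)) has_derivative (\<lambda>v. g' v * G' (g x))) (at x within s)"
  by (rule DERIV_compose_FDERIV[OF G_deriv])

lemma sum_Basis_prod_real:
  fixes f :: "('a::euclidean_space \<times> 'b::euclidean_space) \<Rightarrow> real"
  shows "sum f Basis = sum (\<lambda>i. f (i, 0)) Basis + sum (\<lambda>i. f (0, i)) Basis"
proof -
  have "inj_on (\<lambda>u. (u::'a, 0::'b)) Basis" "inj_on (\<lambda>u. (0::'a, u::'b)) Basis"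
    by (auto intro!: inj_onI Pair_inject)
  thus ?thesis
    unfolding Basis_prod_def
    by (subst sum.union_disjoint) (auto simp: Basis_prod_def sum.reindex)
qed

theorem theorem7p6:
  fixes N :: "'a::euclidean_space set"
    and n :: nat
    and K :: "('a \<times> (real^'s::finite)) set"
    and k :: nat
    and V :: "(('a \<times> (real^'s)) \<times> (('a \<times> (real^'s)) \<Rightarrow>\<^sub>L ('a \<times> (real^'s)))) measure"
  assumes "smooth_submanifold n N"
    and "CARD('s) > 1"
    and "compact K" and "K \<subseteq> N \<times> UNIV"
    and "1 \<le> k" and "k \<le> CARD('s) - 1"
    and "varifold (N \<times> UNIV) (n + k) K V"
    and "stationary (N \<times> UNIV) V"
  shows "emeasure V (space V) = 0"
proof -
  note sm = assms(1)
  define Z where "Z = N \<times> (UNIV :: (real^'s) set)"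
  have "\<forall>q\<in>K. \<exists>r>0. closed (N \<inter> cball (fst q) r)"
  proof
    fix q assume "q \<in> K"
    then have "fst q \<in> N" using assms(4) by auto
    then show "\<exists>r>0. closed (N \<inter> cball (fst q) r)" using loc_closed[OF sm] by metis
  qed
  then obtain r where r: "\<And>q. q \<in> K \<Longrightarrow> r q > 0 \<and> closed (N \<inter> cball (fst q) (r q))"
    by metis
  define \<rho> where "\<rho> q = r q / 2" for q
  have \<rho>pos: "\<And>q. q \<in> K \<Longrightarrow> \<rho> q > 0" using r unfolding \<rho>_def by auto
  have "K \<subseteq> (\<Union>q\<in>K. ball q (\<rho> q))" using \<rho>pos by (auto intro!: bexI)
  then obtain C where C: "C \<subseteq> K" "finite C" "K \<subseteq> (\<Union>q\<in>C. ball q (\<rho> q))"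
    using compactE_image[OF assms(3), of K "\<lambda>q. ball q (\<rho> q)"] by blast
  define a where "a q z = (4 * (\<rho> q)^2 - (z - q) \<bullet> (z - q)) * inverse (3 * (\<rho> q)^2)" for q z :: "'a \<times> (real^'s)"
  define Da where "Da q z v = - (2 * ((z - q) \<bullet> v)) * inverse (3 * (\<rho> q)^2)" for q z v :: "'a \<times> (real^'s)"
  define sf where "sf z = (\<Sum>q\<in>C. G (a q z))" for z
  define \<theta> where "\<theta> z = G (sf z)" for z
  define D\<theta> where "D\<theta> z v = G' (sf z) * (\<Sum>q\<in>C. G' (a q z) * Da q z v)" for z v
  define X where "X z = \<theta> z *\<^sub>R ((0::'a), snd z)" for z :: "'a \<times> (real^'s)"
  define L where "L z v = \<theta> z *\<^sub>R ((0::'a), snd v) + D\<theta> z v *\<^sub>R ((0::'a), snd z)" for z v :: "'a \<times> (real^'s)"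
  define DX where "DX z = Blinfun (L z)" for z
  have da: "((\<lambda>z. a q z) has_derivative Da q z) (at z)" for q z
    unfolding a_def[abs_def] Da_def[abs_def]
    apply (rule derivative_eq_intros refl | simp)+
    apply (clarsimp simp: fun_eq_iff inner_commute algebra_simps)
    by (simp add: field_simps)
  have dsf: "(sf has_derivative (\<lambda>v. \<Sum>q\<in>C. Da q z v * G' (a q z))) (at z)" for z
    unfolding sf_def[abs_def]
    by (intro has_derivative_sum G_chainI da)
  have dth: "(\<theta> has_derivative D\<theta> z) (at z)" for z
  proof -
    have "(\<theta> has_derivative (\<lambda>v. (\<Sum>q\<in>C. Da q z v * G' (a q z)) * G' (sf z))) (at z)"
      unfolding \<theta>_def[abs_def] by (rule G_chainI[OF dsf])
    moreover have "(\<lambda>v. (\<Sum>q\<in>C. Da q z v * G' (a q z)) * G' (sf z)) = D\<theta> z"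
      unfolding D\<theta>_def by (auto simp: fun_eq_iff mult.commute)
    ultimately show ?thesis by simp
  qed
  have dX: "(X has_derivative L z) (at z)" for z
  proof -
    have "((\<lambda>z. (0::'a, snd z)) has_derivative (\<lambda>v. (0::'a, snd v))) (at z)"
      by (auto intro!: derivative_eq_intros)
    from has_derivative_scaleR[OF dth this] show ?thesis
      unfolding X_def[abs_def] L_def by (simp add: algebra_simps)
  qed
  have blL: "bounded_linear (L z)" for z using dX has_derivative_bounded_linear by blast
  have DXa: "blinfun_apply (DX z) = L z" for z
    unfolding DX_def using blL bounded_linear_Blinfun_apply by blast
  have dX': "(X has_derivative blinfun_apply (DX z)) (at z)" for z using dX DXa by simp
  have cDX: "continuous_on UNIV DX"
  proof (rule continuous_on_blinfun_componentwise)
    fix i :: "'a \<times> (real^'s)" assume "i \<in> Basis"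
    have "continuous_on UNIV (\<lambda>z. L z i)"
      unfolding L_def \<theta>_def D\<theta>_def sf_def a_def Da_def by (intro continuous_intros)
    then show "continuous_on UNIV (\<lambda>z. blinfun_apply (DX z) i)" by (simp add: DXa)
  qed

  have X1: "fst (X z) = 0" for z by (simp add: X_def)
  have tang: "X z \<in> tangent_space Z z" if "z \<in> Z" for z
    unfolding tangent_space_def
  proof (intro CollectI exI[of _ "\<lambda>t. z + t *\<^sub>R X z"] conjI allI)
    fix t show "z + t *\<^sub>R X z \<in> Z" using that X1[of z] by (auto simp: Z_def mem_Times_iff)
  next
    show "z + 0 *\<^sub>R X z = z" by simp
    show "((\<lambda>t. z + t *\<^sub>R X z) has_vector_derivative X z) (at 0)"
      by (auto intro!: derivative_eq_intros)
  qed
  define Cs where "Cs = (\<Union>q\<in>C. Z \<inter> cball q (r q))"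
  have supp: "{x\<in>Z. X x \<noteq> 0} \<subseteq> Cs"
  proof
    fix x assume "x \<in> {x\<in>Z. X x \<noteq> 0}"
    then have xZ: "x \<in> Z" and th: "\<theta> x \<noteq> 0" by (auto simp: X_def zero_prod_def)
    then have "\<not> sf x \<le> 0" using G_zero[of "sf x"] by (auto simp: \<theta>_def)
    then obtain q where q: "q \<in> C" "G (a q x) \<noteq> 0"
      unfolding sf_def by (metis (mono_tags, lifting) order_refl sum.neutral)
    then have qK: "q \<in> K" using C(1) by auto
    have ap: "a q x > 0" using q(2) G_zero[of "a q x"] by linarith
    have ip: "inverse (3 * (\<rho> q)^2) > 0" using \<rho>pos[OF qK] by simp
    have "4 * (\<rho> q)^2 - (x - q) \<bullet> (x - q) > 0"
      using ap ip unfolding a_def by (simp add: zero_less_mult_iff)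
    then have "(norm (x - q))^2 < (r q)^2"
      by (simp add: power2_norm_eq_inner \<rho>_def power_divide)
    then have "norm (x - q) < r q"
      using r[OF qK] by (meson abs_norm_cancel less_le power2_less_imp_less)
    then have "x \<in> cball q (r q)" by (simp add: dist_norm norm_minus_commute)
    then show "x \<in> Cs" unfolding Cs_def using q(1) xZ by blast
  qed
  have cl: "compact (Z \<inter> cball q (r q))" if "q \<in> C" for q
  proof -
    have qK: "q \<in> K" using C(1) that by auto
    have "Z \<inter> cball q (r q) = ((N \<inter> cball (fst q) (r q)) \<times> UNIV) \<inter> cball q (r q)"
    proof -
      have "fst x \<in> cball (fst q) (r q)" if "x \<in> cball q (r q)" for x
        using that dist_fst_le[of q x] by auto
      then show ?thesis by (auto simp: Z_def mem_Times_iff)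
    qed
    moreover have "closed ((N \<inter> cball (fst q) (r q)) \<times> (UNIV::(real^'s) set))"
      using r[OF qK] closed_Times closed_UNIV by blast
    ultimately show ?thesis using closed_Int_compact compact_cball by metis
  qed
  have cCs: "compact Cs" unfolding Cs_def using C(2) cl by (intro compact_UN) auto
  have CsZ: "Cs \<subseteq> Z" unfolding Cs_def by auto
  have clos: "closure {x\<in>Z. X x \<noteq> 0} \<subseteq> Cs"
    using supp closure_minimal compact_imp_closed[OF cCs] by blast
  have ccomp: "compact (closure {x\<in>Z. X x \<noteq> 0})"
    using compact_Int_closed[OF cCs closed_closure, of "{x\<in>Z. X x \<noteq> 0}"] clos
    by (simp add: Int_absorb1)
  have ttf: "tangent_test_field (N \<times> UNIV) X DX"
    unfolding tangent_test_field_def Z_def[symmetric]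
    using dX' cDX tang ccomp clos CsZ by blast
  define f where "f xP = div_plane (snd xP) (DX (fst xP))" for xP
  have int0: "integral\<^sup>L V f = 0" using assms(8) ttf unfolding stationary_def f_def by blast
  have onK: "DX z v = (0, snd v)" if zK: "z \<in> K" for z v
  proof -
    obtain q where q: "q \<in> C" "z \<in> ball q (\<rho> q)" using C(3) zK by blast
    have qK: "q \<in> K" using q C by auto
    have rp: "\<rho> q > 0" using \<rho>pos[OF qK] .
    have "norm (z - q) \<le> \<rho> q" using q(2) by (simp add: dist_norm norm_minus_commute)
    then have "(norm (z - q))^2 \<le> (\<rho> q)^2" by (simp add: power_mono)
    then have d: "(z - q) \<bullet> (z - q) \<le> (\<rho> q)^2" by (simp add: power2_norm_eq_inner)
    have "1 = (3 * (\<rho> q)^2) * inverse (3 * (\<rho> q)^2)" using rp by simp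
    also have "\<dots> \<le> (4 * (\<rho> q)^2 - (z - q) \<bullet> (z - q)) * inverse (3 * (\<rho> q)^2)"
      using d rp by (intro mult_right_mono) auto
    finally have "1 \<le> a q z" unfolding a_def .
    then have "G (a q z) = 1" by (rule G_one)
    moreover have "G (a q z) \<le> sf z" unfolding sf_def
      using q(1) C(2) by (intro member_le_sum) (auto simp: G_nonneg)
    ultimately have s1: "1 \<le> sf z" by simp
    then have "\<theta> z = 1" "D\<theta> z v = 0" by (simp_all add: \<theta>_def D\<theta>_def G_one G'_one)
    then show ?thesis by (simp add: DXa L_def)
  qed
  have f_eq: "f xP = (\<Sum>v\<in>Basis. snd xP (0, v) \<bullet> (0, v))" if "fst xP \<in> K" for xP
  proof -
    have "f xP = (\<Sum>b\<in>Basis. snd xP b \<bullet> ((0::'a), snd b))"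
      unfolding f_def div_plane_def using onK[OF that] by simp
    also have "\<dots> = (\<Sum>v\<in>Basis. snd xP (0, v) \<bullet> (0, v))"
      by (simp add: sum_Basis_prod_real flip: zero_prod_def)
    finally show ?thesis .
  qed
  have AEb: "AE xP in V. xP \<in> grassmann_bundle (N \<times> UNIV) (n + k) K"
    using assms(7) unfolding varifold_def by blast
  have AEpos: "AE xP in V. 0 < f xP \<and> f xP \<le> real CARD('s)"
    using AEb
  proof (rule AE_mp, intro AE_I2 impI)
    fix xP assume "xP \<in> grassmann_bundle (N \<times> UNIV) (n + k) K"
    then have zK: "fst xP \<in> K" and pl: "is_plane (N \<times> UNIV) (n + k) (fst xP) (snd xP)"
      unfolding grassmann_bundle_def by auto
    have "fst (fst xP) \<in> N" using zK assms(4) by auto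
    then obtain T where T: "subspace T" "dim T \<le> n" "tangent_space N (fst (fst xP)) \<subseteq> T"
      using tangent_bound[OF sm] by metis
    from plane_pos[OF T pl assms(5)] show "0 < f xP \<and> f xP \<le> real CARD('s)"
      using f_eq[OF zK] by simp
  qed
  have cf: "continuous_on UNIV f"
  proof -
    have c1: "continuous_on UNIV (\<lambda>xP::(('a \<times> (real^'s)) \<times> (('a \<times> (real^'s)) \<Rightarrow>\<^sub>L ('a \<times> (real^'s)))). DX (fst xP))"
      using continuous_on_compose2[OF cDX continuous_on_fst[OF continuous_on_id]] by simp
    show ?thesis unfolding f_def[abs_def] div_plane_def
      by (intro continuous_intros c1)
  qed
  have sV: "sets V = sets borel" using assms(7) unfolding varifold_def by blast
  have mf: "f \<in> borel_measurable V"
    by (subst measurable_cong_sets[OF sV refl]) (rule borel_measurable_continuous_onI[OF cf])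
  have fin: "finite_measure V" using assms(7) unfolding varifold_def by (intro finite_measureI) auto
  have "AE xP in V. norm (f xP) \<le> real CARD('s)" using AEpos by eventually_elim auto
  then have intf: "integrable V f"
    by (intro finite_measure.integrable_const_bound[OF fin] mf)
  have "AE xP in V. 0 \<le> f xP" using AEpos by eventually_elim auto
  then have "AE xP in V. f xP = 0"
    using integral_nonneg_eq_0_iff_AE[OF intf] int0 by blast
  with AEpos have "AE xP in V. False" by eventually_elim auto
  then have "ae_filter V = bot" by (simp add: eventually_False)
  then show ?thesis using ae_filter_eq_bot_iff by blast
qed
end
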